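(* Let $(\mathcal Q,d)$ be a metric space, $Y$ a $\mathcal Q$-valued random variable, $o\in\mathcal Q$, and $\tau\in\mathcal S_0^+$ with $\mathbb E[\tau'(d(Y,o))]<\infty$. Fix $p\in\mathcal Q$. (i) If $\operatorname{diam}(\mathcal Q)=\infty$, then $$\liminf_{r\to\infty}\inf_{q\in\mathcal Q\setminus B(o,r)}\frac{\mathbb E[\tau(d(Y,q))-\tau(d(Y,p))]}{\tau(d(q,p))}=\limsup_{r\to\infty}\sup_{q\in\mathcal Q\setminus B(o,r)}\frac{\mathbb E[\tau(d(Y,q))-\tau(d(Y,p))]}{\tau(d(q,p))}=1.$$ (ii) If $p$ is an accumulation point of $\mathcal Q$, then $$\limsup_{r\to0}\sup_{q\in B(p,r)\setminus\{p\}}\frac{\mathbb E[\tau(d(Y,q))-\tau(d(Y,p))]}{d(q,p)}\le\mathbb E[\tau'(d(Y,p))].$$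
   Context: $\mathcal S$ is the set of nondecreasing convex $\tau:[0,\infty)\to\mathbb R$, differentiable on $(0,\infty)$ with concave derivative $\tau'$, with $\tau'(0):=\lim_{x\searrow0}\tau'(x)$; $\mathcal S_0^+$ is the set of $\tau\in\mathcal S$ with $\tau(0)=0$ and $\tau'(x)>0$ for all $x>0$. $B(p,r):=\{q\in\mathcal Q: d(q,p)<r\}$ is the open ball and $\operatorname{diam}(\mathcal Q)=\sup_{q,p}d(q,p)$. $\mathcal Q$ carries its Borel $\sigma$-algebra. *)

theory Defs
  imports "HOL-Analysis.Analysis" "HOL-Probability.Probability"
begin

definition S_class :: "(real \<Rightarrow> real) set" where
  "S_class = {\<tau>. mono_on {0..} \<tau> \<and> convex_on {0..} \<tau>
      \<and> (\<forall>x>0. \<tau> differentiable at x) \<and> concave_on {0<..} (deriv \<tau>)}"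

definition tau_deriv :: "(real \<Rightarrow> real) \<Rightarrow> real \<Rightarrow> real" where
  "tau_deriv \<tau> x = (if x = 0 then Lim (at_right 0) (deriv \<tau>) else deriv \<tau> x)"

definition S0_plus :: "(real \<Rightarrow> real) set" where
  "S0_plus = {\<tau>\<in>S_class. \<tau> 0 = 0 \<and> (\<forall>x>0. tau_deriv \<tau> x > 0)}"

end

theory Submission
  imports Defs
begin


context
  fixes \<tau> :: "real \<Rightarrow> real"
  assumes tau: "\<tau> \<in> S0_plus"
begin

lemma tau_mono: "0 \<le> x \<Longrightarrow> x \<le> y \<Longrightarrow> \<tau> x \<le> \<tau> y"
  using tau by (auto simp: S0_plus_def S_class_def mono_on_def)
lemma tau0: "\<tau> 0 = 0"
  using tau by (auto simp: S0_plus_def)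
lemma tau_nonneg: "0 \<le> x \<Longrightarrow> 0 \<le> \<tau> x"
  using tau_mono[of 0 x] tau0 by simp
lemma tau_convex: "convex_on {0..} \<tau>"
  using tau by (auto simp: S0_plus_def S_class_def)
lemma dtau_concave: "concave_on {0<..} (deriv \<tau>)"
  using tau by (auto simp: S0_plus_def S_class_def)
lemma tau_diff: "x > 0 \<Longrightarrow> (\<tau> has_real_derivative deriv \<tau> x) (at x)"
  using tau by (auto simp: S0_plus_def S_class_def DERIV_deriv_iff_real_differentiable)
lemma tangent: "x > 0 \<Longrightarrow> 0 \<le> y \<Longrightarrow> \<tau> y - \<tau> x \<ge> deriv \<tau> x * (y - x)"
  by (rule convex_on_imp_above_tangent[OF tau_convex]) (auto intro: has_field_derivative_at_within tau_diff)
lemma dtau_pos: "x > 0 \<Longrightarrow> deriv \<tau> x > 0"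
  using tau by (auto simp: S0_plus_def tau_deriv_def)
lemma dtau_nonneg: "x > 0 \<Longrightarrow> deriv \<tau> x \<ge> 0"
  using dtau_pos[of x] by simp
lemma dtau_mono: "0 < x \<Longrightarrow> x \<le> y \<Longrightarrow> deriv \<tau> x \<le> deriv \<tau> y"
proof -
  assume a: "0 < x" "x \<le> y"
  have "\<tau> y - \<tau> x \<ge> deriv \<tau> x * (y - x)" using tangent a by simp
  moreover have "\<tau> x - \<tau> y \<ge> deriv \<tau> y * (x - y)" using tangent a by simp
  ultimately have "(deriv \<tau> y - deriv \<tau> x) * (y - x) \<ge> 0" by (simp add: algebra_simps)
  then show ?thesis using a by (cases "x = y") (auto simp: zero_le_mult_iff)
qed
lemma tau_pos: "x > 0 \<Longrightarrow> \<tau> x > 0"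
proof -
  assume x: "x > 0"
  have "\<tau> x - \<tau> (x/2) \<ge> deriv \<tau> (x/2) * (x - x/2)" using tangent[of "x/2" x] x by simp
  moreover have "deriv \<tau> (x/2) > 0"
    using tau x by (auto simp: S0_plus_def tau_deriv_def)
  moreover have "\<tau> (x/2) \<ge> 0" using tau_nonneg x by simp
  moreover have "deriv \<tau> (x/2) * (x - x/2) > 0" using \<open>deriv \<tau> (x/2) > 0\<close> x by simp
  ultimately show ?thesis by linarith
qed


definition "L0 = Inf (deriv \<tau> ` {0<..})"

lemma L0_le: "x > 0 \<Longrightarrow> L0 \<le> deriv \<tau> x"
  unfolding L0_def by (rule cInf_lower) (auto intro!: bdd_belowI[of _ 0] dtau_nonneg)
lemma L0_nonneg: "0 \<le> L0"
  unfolding L0_def by (rule cInf_greatest) (auto intro: dtau_nonneg)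
lemma dtau_lim0: "(deriv \<tau> \<longlongrightarrow> L0) (at_right 0)"
proof (rule order_tendstoI)
  fix a assume a: "a < L0"
  show "\<forall>\<^sub>F x in at_right 0. a < deriv \<tau> x"
    using eventually_at_right_less[of 0] 
    by eventually_elim (use a L0_le in force)
next
  fix a assume a: "L0 < a"
  then obtain x0 where x0: "x0 \<in> {0<..}" "deriv \<tau> x0 < a"
    unfolding L0_def by (subst (asm) cInf_less_iff) (auto intro!: bdd_belowI[of _ 0] dtau_nonneg)
  have x0p: "0 < x0" using x0 by simp
  show "\<forall>\<^sub>F x in at_right 0. deriv \<tau> x < a"
    using eventually_at_right_real[OF x0p] by eventually_elim (meson dtau_mono greaterThanLessThan_iff less_imp_le order.strict_trans1 x0(2))
qed
lemma T0: "tau_deriv \<tau> 0 = L0"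
  unfolding tau_deriv_def using tendsto_Lim[OF trivial_limit_at_right_real dtau_lim0] by simp
lemma Tpos: "x > 0 \<Longrightarrow> tau_deriv \<tau> x = deriv \<tau> x"
  unfolding tau_deriv_def by simp
lemma T_nonneg: "0 \<le> tau_deriv \<tau> x" if "0 \<le> x"
proof (cases "x = 0")
  case True then show ?thesis using T0 L0_nonneg by simp
next
  case False then show ?thesis using that Tpos[of x] dtau_nonneg[of x] by simp
qed
lemma T_mono: "0 \<le> x \<Longrightarrow> x \<le> y \<Longrightarrow> tau_deriv \<tau> x \<le> tau_deriv \<tau> y"
proof -
  assume a: "0 \<le> x" "x \<le> y"
  show ?thesis
  proof (cases "x = 0")
    case True
    then show ?thesis
    proof (cases "y = 0")
      case False then have "y > 0" using a by simp
      then show ?thesis using True T0 L0_le[of y] Tpos[of y] by simp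
    qed simp
  next
    case False then have "x > 0" "y > 0" using a by auto
    then show ?thesis using Tpos dtau_mono a by simp
  qed
qed

lemma dtau_scale: assumes "0 < x" "x \<le> z" shows "x * deriv \<tau> z \<le> z * deriv \<tau> x"
proof (cases "x = z")
  case False
  with assms have xz: "x < z" by simp
  have key: "(x - s) * deriv \<tau> z \<le> z * deriv \<tau> x" if s: "0 < s" "s < x" for s
  proof -
    define t where "t = (x - s) / (z - s)"
    have t: "0 \<le> t" "t \<le> 1" using s xz by (auto simp: t_def)
    have "t * (z - s) = x - s" using s xz by (simp add: t_def)
    then have "(1 - t) *\<^sub>R s + t *\<^sub>R z = x" by (simp add: algebra_simps)
    moreover have "deriv \<tau> ((1 - t) *\<^sub>R s + t *\<^sub>R z) \<ge> (1 - t) * deriv \<tau> s + t * deriv \<tau> z"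
      by (rule concave_onD[OF dtau_concave t]) (use s xz in auto)
    ultimately have "deriv \<tau> x \<ge> (1 - t) * deriv \<tau> s + t * deriv \<tau> z" by simp
    moreover have "(1 - t) * deriv \<tau> s \<ge> 0" using t s dtau_nonneg by simp
    ultimately have "deriv \<tau> x \<ge> t * deriv \<tau> z" by simp
    then have "deriv \<tau> x * (z - s) \<ge> t * deriv \<tau> z * (z - s)"
      by (rule mult_right_mono) (use s xz in simp)
    also have "t * deriv \<tau> z * (z - s) = (t * (z - s)) * deriv \<tau> z" by (simp only: mult_ac)
    also have "\<dots> = (x - s) * deriv \<tau> z" using \<open>t * (z - s) = x - s\<close> by simp
    finally have "deriv \<tau> x * (z - s) \<ge> (x - s) * deriv \<tau> z" .
    moreover have "deriv \<tau> x * (z - s) \<le> z * deriv \<tau> x" using s dtau_nonneg[of x] by (simp add: algebra_simps)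
    ultimately show ?thesis by simp
  qed
  show ?thesis
  proof (rule ccontr)
    assume c: "\<not> ?thesis"
    define g where "g = x * deriv \<tau> z - z * deriv \<tau> x"
    have g: "g > 0" using c by (simp add: g_def)
    have dz: "deriv \<tau> z > 0" using dtau_pos xz assms by simp
    define s where "s = min (x/2) (g / (2 * deriv \<tau> z))"
    have s: "0 < s" "s < x" using g dz assms by (auto simp: s_def)
    have "s \<le> g / (2 * deriv \<tau> z)" by (simp add: s_def)
    then have "s * deriv \<tau> z \<le> g / (2 * deriv \<tau> z) * deriv \<tau> z"
      by (rule mult_right_mono) (use dz in simp)
    then have "s * deriv \<tau> z \<le> g / 2" using dz by simp
    then have "(x - s) * deriv \<tau> z > z * deriv \<tau> x" using g by (simp add: g_def algebra_simps)
    with key[OF s] show False by simp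
  qed
qed simp

lemma T_subadd: "tau_deriv \<tau> (x + y) \<le> tau_deriv \<tau> x + tau_deriv \<tau> y" if xy: "0 \<le> x" "0 \<le> y"
proof (cases "x = 0 \<or> y = 0")
  case True then show ?thesis using T_nonneg[of x] T_nonneg[of y] xy by auto
next
  case False
  then have p: "x > 0" "y > 0" using xy by auto
  have a: "x * deriv \<tau> (x+y) \<le> (x+y) * deriv \<tau> x" by (rule dtau_scale) (use p in simp_all)
  have b: "y * deriv \<tau> (x+y) \<le> (x+y) * deriv \<tau> y" by (rule dtau_scale) (use p in simp_all)
  have "(x+y) * deriv \<tau> (x+y) \<le> (x+y) * (deriv \<tau> x + deriv \<tau> y)"
    using add_mono[OF a b] by (simp add: algebra_simps)
  then have "deriv \<tau> (x+y) \<le> deriv \<tau> x + deriv \<tau> y"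
    using p by (simp add: mult_le_cancel_left_pos)
  then show ?thesis using p Tpos[of x] Tpos[of y] Tpos[of "x+y"] by simp
qed

lemma dtau_cont: "continuous_on {0<..} (deriv \<tau>)"
proof -
  have "continuous_on {0<..} (\<lambda>x. - deriv \<tau> x)"
    using dtau_concave by (intro convex_on_continuous) (auto simp: concave_on_def)
  from continuous_on_minus[OF this] show ?thesis by simp
qed

lemma T_right_cont: assumes b: "0 \<le> b" shows "(tau_deriv \<tau> \<longlongrightarrow> tau_deriv \<tau> b) (at_right b)"
proof (cases "b = 0")
  case True
  have "\<forall>\<^sub>F x in at_right 0. deriv \<tau> x = tau_deriv \<tau> x"
    using eventually_at_right_less[of 0] by eventually_elim (simp add: Tpos)
  then show ?thesis using dtau_lim0 T0 True tendsto_cong by fastforce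
next
  case False
  then have bp: "b > 0" using b by simp
  have "isCont (deriv \<tau>) b"
    using dtau_cont bp by (metis continuous_on_eq_continuous_at greaterThan_iff open_greaterThan)
  then have "(deriv \<tau> \<longlongrightarrow> deriv \<tau> b) (at_right b)"
    by (simp add: continuous_at filterlim_at_split)
  moreover have "\<forall>\<^sub>F x in at_right b. deriv \<tau> x = tau_deriv \<tau> x"
    using eventually_at_right_less[of b] by eventually_elim (use bp Tpos in simp)
  ultimately show ?thesis using Tpos[OF bp] tendsto_cong by fastforce
qed

lemma tau_incr_bound: "0 \<le> x \<Longrightarrow> x \<le> y \<Longrightarrow> \<tau> y - \<tau> x \<le> (y - x) * tau_deriv \<tau> y"
proof -
  assume a: "0 \<le> x" "x \<le> y"
  show ?thesis
  proof (cases "y = 0")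
    case True then show ?thesis using a by simp
  next
    case False
    then have "y > 0" using a by simp
    then show ?thesis using tangent[of y x] a Tpos by (simp add: algebra_simps)
  qed
qed

lemma tau_lin: "1 \<le> D \<Longrightarrow> D * \<tau> 1 \<le> \<tau> D"
proof -
  assume D: "1 \<le> D"
  have "\<tau> ((1 - 1/D) *\<^sub>R 0 + (1/D) *\<^sub>R D) \<le> (1 - 1/D) * \<tau> 0 + (1/D) * \<tau> D"
    using convex_onD[OF tau_convex, of "1/D" 0 D] D by simp
  then have "\<tau> 1 \<le> \<tau> D / D" using D tau0 by simp
  then show ?thesis using D by (simp add: field_simps)
qed

lemma tau_DT: "0 < D \<Longrightarrow> D * tau_deriv \<tau> D \<le> 4 * \<tau> D"
proof -
  assume D: "0 < D"
  have "\<tau> D - \<tau> (D/2) \<ge> deriv \<tau> (D/2) * (D - D/2)" using tangent[of "D/2" D] D by simp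
  moreover have "tau_deriv \<tau> D \<le> 2 * deriv \<tau> (D/2)"
    using T_subadd[of "D/2" "D/2"] D Tpos[of "D/2"] by simp
  moreover have "\<tau> (D/2) \<ge> 0" using tau_nonneg D by simp
  ultimately have "D * tau_deriv \<tau> D \<le> D * (2 * deriv \<tau> (D/2))" "deriv \<tau> (D/2) * (D/2) \<le> \<tau> D"
    using D by (auto intro: mult_left_mono)
  then show ?thesis by (simp add: algebra_simps)
qed

end


lemma ereal_eps_tendsto:
  fixes f :: "'x \<Rightarrow> ereal"
  assumes "\<And>\<epsilon>. \<epsilon> > 0 \<Longrightarrow> eventually (\<lambda>r. ereal (c - \<epsilon>) \<le> f r \<and> f r \<le> ereal (c + \<epsilon>)) F"
  shows "(f \<longlongrightarrow> ereal c) F"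
proof (rule order_tendstoI)
  fix a assume "a < ereal c"
  then obtain z where z: "a < ereal z" "ereal z < ereal c" using ereal_dense2 by blast
  then have "c - z > 0" by simp
  from assms[OF this] show "eventually (\<lambda>r. a < f r) F"
    by eventually_elim (use z in \<open>auto intro: less_le_trans\<close>)
next
  fix a assume "ereal c < a"
  then obtain z where z: "ereal c < ereal z" "ereal z < a" using ereal_dense2 by blast
  then have "z - c > 0" by simp
  from assms[OF this] show "eventually (\<lambda>r. f r < a) F"
    by eventually_elim (use z in \<open>auto intro: le_less_trans\<close>)
qed

context
  fixes \<tau> :: "real \<Rightarrow> real"
  assumes tau: "\<tau> \<in> S0_plus"
begin

lemma P1: assumes "0 \<le> a" "0 \<le> b" "\<bar>a - b\<bar> \<le> D"
  shows "\<bar>\<tau> a - \<tau> b\<bar> \<le> D * (tau_deriv \<tau> b + tau_deriv \<tau> D)"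
proof -
  have D: "0 \<le> D" using assms by simp
  have Tb: "0 \<le> tau_deriv \<tau> b" "0 \<le> tau_deriv \<tau> D" using T_nonneg[OF tau] assms D by auto
  show ?thesis
  proof (cases "b \<le> a")
    case True
    have "\<tau> a - \<tau> b \<le> (a - b) * tau_deriv \<tau> a" using tau_incr_bound[OF tau] True assms by simp
    also have "\<dots> \<le> D * tau_deriv \<tau> (b + D)"
      using assms True T_mono[OF tau, of a "b + D"] T_nonneg[OF tau, of a]
      by (intro mult_mono) auto
    also have "\<dots> \<le> D * (tau_deriv \<tau> b + tau_deriv \<tau> D)"
      using T_subadd[OF tau, of b D] assms D by (intro mult_left_mono) auto
    finally show ?thesis using tau_mono[OF tau, of b a] True assms by simp
  next
    case False
    have "\<tau> b - \<tau> a \<le> (b - a) * tau_deriv \<tau> b" using tau_incr_bound[OF tau] False assms by simp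
    also have "\<dots> \<le> D * tau_deriv \<tau> b"
      using assms False Tb by (intro mult_right_mono) auto
    also have "\<dots> \<le> D * (tau_deriv \<tau> b + tau_deriv \<tau> D)"
      using Tb D by (simp add: algebra_simps)
    finally show ?thesis using tau_mono[OF tau, of a b] False assms by simp
  qed
qed

lemma P2: assumes "0 \<le> a" "0 \<le> b" "0 < D" "\<bar>a - D\<bar> \<le> b"
  shows "\<bar>\<tau> a - \<tau> b - \<tau> D\<bar> \<le> b * tau_deriv \<tau> D + 2 * b * tau_deriv \<tau> b"
proof -
  have TD: "0 \<le> tau_deriv \<tau> D" "0 \<le> tau_deriv \<tau> b" using T_nonneg[OF tau] assms by auto
  have tb: "0 \<le> \<tau> b" "\<tau> b \<le> b * tau_deriv \<tau> b"
    using tau_nonneg[OF tau, of b] tau_incr_bound[OF tau, of 0 b] tau0[OF tau] assms by auto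
  have up1: "\<tau> a \<le> \<tau> (D + b)" using tau_mono[OF tau, of a "D + b"] assms by simp
  have "\<tau> (D + b) - \<tau> D \<le> b * tau_deriv \<tau> (D + b)"
    using tau_incr_bound[OF tau, of D "D + b"] assms by simp
  also have "\<dots> \<le> b * (tau_deriv \<tau> D + tau_deriv \<tau> b)"
    using T_subadd[OF tau, of D b] assms by (intro mult_left_mono) auto
  finally have up: "\<tau> a - \<tau> b - \<tau> D \<le> b * tau_deriv \<tau> D + 2 * b * tau_deriv \<tau> b"
    using up1 tb TD assms by (simp add: algebra_simps)
  have lo1: "\<tau> D - \<tau> a \<le> b * tau_deriv \<tau> D"
  proof (cases "a \<le> D")
    case True
    have "\<tau> D - \<tau> a \<le> (D - a) * tau_deriv \<tau> D" using tau_incr_bound[OF tau, of a D] True assms by simp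
    also have "\<dots> \<le> b * tau_deriv \<tau> D" using assms TD by (intro mult_right_mono) auto
    finally show ?thesis .
  next
    case False
    then have "\<tau> D \<le> \<tau> a" using tau_mono[OF tau, of D a] assms by simp
    then show ?thesis using TD assms by (smt (verit) mult_nonneg_nonneg)
  qed
  have "- (\<tau> a - \<tau> b - \<tau> D) \<le> b * tau_deriv \<tau> D + 2 * b * tau_deriv \<tau> b"
    using lo1 tb TD assms by (simp add: algebra_simps)
  with up show ?thesis by linarith
qed

lemma P3: assumes "0 \<le> a" "0 \<le> b" "\<bar>a - b\<bar> \<le> D"
  shows "\<tau> a - \<tau> b \<le> D * tau_deriv \<tau> (b + D)"
proof (cases "b \<le> a")
  case True
  have "\<tau> a - \<tau> b \<le> (a - b) * tau_deriv \<tau> a" using tau_incr_bound[OF tau] True assms by simp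
  also have "\<dots> \<le> D * tau_deriv \<tau> (b + D)"
    using assms True T_mono[OF tau, of a "b + D"] T_nonneg[OF tau, of a]
    by (intro mult_mono) auto
  finally show ?thesis .
next
  case False
  then have "\<tau> a - \<tau> b \<le> 0" using tau_mono[OF tau, of a b] assms by simp
  moreover have "0 \<le> D * tau_deriv \<tau> (b + D)" using T_nonneg[OF tau, of "b + D"] assms by simp
  ultimately show ?thesis by linarith
qed

end



lemma mono_comp_meas:
  fixes f :: "real \<Rightarrow> real"
  assumes "mono_on {0..} f" "g \<in> borel_measurable M" "\<And>\<omega>. 0 \<le> g \<omega>"
  shows "(\<lambda>\<omega>. f (g \<omega>)) \<in> borel_measurable M"
proof -
  have "mono (\<lambda>x. f (max 0 x))" using assms(1) by (intro monoI) (auto simp: mono_on_def)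
  then have "(\<lambda>x. f (max 0 x)) \<in> borel_measurable borel" by (rule borel_measurable_mono)
  from measurable_compose[OF assms(2) this] show ?thesis using assms(3) by (simp add: max_absorb2)
qed

context
  fixes \<tau> :: "real \<Rightarrow> real" and M :: "'b measure" and Y :: "'b \<Rightarrow> 'a::metric_space" and o' :: 'a
  assumes tau: "\<tau> \<in> S0_plus" and P: "prob_space M" and Ym: "Y \<in> measurable M borel"
    and hyp: "(\<integral>\<^sup>+ \<omega>. ennreal (tau_deriv \<tau> (dist (Y \<omega>) o')) \<partial>M) < \<infinity>"
begin

interpretation prob_space M by (rule P)

lemma dist_meas[measurable]: "(\<lambda>\<omega>. dist (Y \<omega>) q) \<in> borel_measurable M"
proof -
  have "(\<lambda>x. dist x q) \<in> borel_measurable borel"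
    by (rule borel_measurable_continuous_onI) (intro continuous_intros)
  from measurable_compose[OF Ym this] show ?thesis .
qed

lemma tau_meas: "g \<in> borel_measurable M \<Longrightarrow> (\<And>\<omega>. 0 \<le> g \<omega>) \<Longrightarrow> (\<lambda>\<omega>. \<tau> (g \<omega>)) \<in> borel_measurable M"
  by (rule mono_comp_meas) (use tau_mono[OF tau] in \<open>auto simp: mono_on_def\<close>)
lemma T_meas: "g \<in> borel_measurable M \<Longrightarrow> (\<And>\<omega>. 0 \<le> g \<omega>) \<Longrightarrow> (\<lambda>\<omega>. tau_deriv \<tau> (g \<omega>)) \<in> borel_measurable M"
  by (rule mono_comp_meas) (use T_mono[OF tau] in \<open>auto simp: mono_on_def\<close>)

lemma T_int_o: "integrable M (\<lambda>\<omega>. tau_deriv \<tau> (dist (Y \<omega>) o'))"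
  unfolding integrable_iff_bounded
proof
  show "(\<lambda>\<omega>. tau_deriv \<tau> (dist (Y \<omega>) o')) \<in> borel_measurable M" by (rule T_meas) auto
  show "(\<integral>\<^sup>+ \<omega>. ennreal (norm (tau_deriv \<tau> (dist (Y \<omega>) o'))) \<partial>M) < \<infinity>"
    using hyp T_nonneg[OF tau] by simp
qed

lemma T_int: "integrable M (\<lambda>\<omega>. tau_deriv \<tau> (dist (Y \<omega>) p))"
proof (rule Bochner_Integration.integrable_bound)
  show "integrable M (\<lambda>\<omega>. tau_deriv \<tau> (dist (Y \<omega>) o') + tau_deriv \<tau> (dist o' p))"
    using T_int_o by simp
  show "(\<lambda>\<omega>. tau_deriv \<tau> (dist (Y \<omega>) p)) \<in> borel_measurable M" by (rule T_meas) auto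
  show "AE \<omega> in M. norm (tau_deriv \<tau> (dist (Y \<omega>) p))
      \<le> norm (tau_deriv \<tau> (dist (Y \<omega>) o') + tau_deriv \<tau> (dist o' p))"
  proof (rule AE_I2)
    fix \<omega>
    have "tau_deriv \<tau> (dist (Y \<omega>) p) \<le> tau_deriv \<tau> (dist (Y \<omega>) o' + dist o' p)"
      by (rule T_mono[OF tau]) (auto intro: dist_triangle)
    also have "\<dots> \<le> tau_deriv \<tau> (dist (Y \<omega>) o') + tau_deriv \<tau> (dist o' p)"
      by (rule T_subadd[OF tau]) auto
    finally show "norm (tau_deriv \<tau> (dist (Y \<omega>) p))
      \<le> norm (tau_deriv \<tau> (dist (Y \<omega>) o') + tau_deriv \<tau> (dist o' p))"
      using T_nonneg[OF tau] by (simp add: add_nonneg_nonneg)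
  qed
qed

lemma T_shift_int: assumes c: "0 \<le> c" shows "integrable M (\<lambda>\<omega>. tau_deriv \<tau> (dist (Y \<omega>) p + c))"
proof (rule Bochner_Integration.integrable_bound)
  show "integrable M (\<lambda>\<omega>. tau_deriv \<tau> (dist (Y \<omega>) p) + tau_deriv \<tau> c)"
    using T_int by simp
  show "(\<lambda>\<omega>. tau_deriv \<tau> (dist (Y \<omega>) p + c)) \<in> borel_measurable M" by (rule T_meas) (use c in auto)
  show "AE \<omega> in M. norm (tau_deriv \<tau> (dist (Y \<omega>) p + c))
      \<le> norm (tau_deriv \<tau> (dist (Y \<omega>) p) + tau_deriv \<tau> c)"
  proof (rule AE_I2)
    fix \<omega>
    have "tau_deriv \<tau> (dist (Y \<omega>) p + c) \<le> tau_deriv \<tau> (dist (Y \<omega>) p) + tau_deriv \<tau> c"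
      by (rule T_subadd[OF tau]) (use c in auto)
    then show "norm (tau_deriv \<tau> (dist (Y \<omega>) p + c))
      \<le> norm (tau_deriv \<tau> (dist (Y \<omega>) p) + tau_deriv \<tau> c)"
      using T_nonneg[OF tau] c by (simp add: add_nonneg_nonneg)
  qed
qed

lemma dist_diff: "\<bar>dist (Y \<omega>) q - dist (Y \<omega>) p\<bar> \<le> dist q p"
  using dist_triangle[of "Y \<omega>" q p] dist_triangle[of "Y \<omega>" p q] by (simp add: dist_commute abs_le_iff)

lemma dist_diff2: "\<bar>dist (Y \<omega>) q - dist q p\<bar> \<le> dist (Y \<omega>) p"
  using dist_triangle[of "Y \<omega>" q p] dist_triangle[of q p "Y \<omega>"]
  by (simp add: dist_commute abs_le_iff)

lemma diff_int: "integrable M (\<lambda>\<omega>. \<tau> (dist (Y \<omega>) q) - \<tau> (dist (Y \<omega>) p))"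
proof (rule Bochner_Integration.integrable_bound)
  show "integrable M (\<lambda>\<omega>. dist q p * (tau_deriv \<tau> (dist (Y \<omega>) p) + tau_deriv \<tau> (dist q p)))"
    using T_int by simp
  show "(\<lambda>\<omega>. \<tau> (dist (Y \<omega>) q) - \<tau> (dist (Y \<omega>) p)) \<in> borel_measurable M"
    using tau_meas[of "\<lambda>\<omega>. dist (Y \<omega>) q"] tau_meas[of "\<lambda>\<omega>. dist (Y \<omega>) p"] by simp
  show "AE \<omega> in M. norm (\<tau> (dist (Y \<omega>) q) - \<tau> (dist (Y \<omega>) p))
      \<le> norm (dist q p * (tau_deriv \<tau> (dist (Y \<omega>) p) + tau_deriv \<tau> (dist q p)))"
  proof (rule AE_I2)
    fix \<omega>
    have "\<bar>\<tau> (dist (Y \<omega>) q) - \<tau> (dist (Y \<omega>) p)\<bar> \<le> dist q p * (tau_deriv \<tau> (dist (Y \<omega>) p) + tau_deriv \<tau> (dist q p))"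
      by (rule P1[OF tau]) (use dist_diff in auto)
    then show "norm (\<tau> (dist (Y \<omega>) q) - \<tau> (dist (Y \<omega>) p))
      \<le> norm (dist q p * (tau_deriv \<tau> (dist (Y \<omega>) p) + tau_deriv \<tau> (dist q p)))"
      by simp
  qed
qed


definition "mf p D \<omega> = min (dist (Y \<omega>) p * tau_deriv \<tau> D + 2 * dist (Y \<omega>) p * tau_deriv \<tau> (dist (Y \<omega>) p))
      (D * (tau_deriv \<tau> (dist (Y \<omega>) p) + tau_deriv \<tau> D) + \<tau> D)"
definition "Gf p D = (\<integral>\<omega>. mf p D \<omega> \<partial>M) / \<tau> D"

lemma Tb_meas[measurable]: "(\<lambda>\<omega>. tau_deriv \<tau> (dist (Y \<omega>) p)) \<in> borel_measurable M"
  by (rule T_meas) auto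

lemma mf_meas[measurable]: "mf p D \<in> borel_measurable M"
  unfolding mf_def by measurable

lemma mf_nonneg: "0 \<le> D \<Longrightarrow> 0 \<le> mf p D \<omega>"
  unfolding mf_def using T_nonneg[OF tau, of D] T_nonneg[OF tau, of "dist (Y \<omega>) p"] tau_nonneg[OF tau, of D]
  by (auto intro!: add_nonneg_nonneg mult_nonneg_nonneg)

lemma mf_int: assumes D: "0 \<le> D" shows "integrable M (mf p D)"
proof (rule Bochner_Integration.integrable_bound)
  show "integrable M (\<lambda>\<omega>. D * (tau_deriv \<tau> (dist (Y \<omega>) p) + tau_deriv \<tau> D) + \<tau> D)"
    using T_int by simp
  show "mf p D \<in> borel_measurable M" by measurable
  show "AE \<omega> in M. norm (mf p D \<omega>) \<le> norm (D * (tau_deriv \<tau> (dist (Y \<omega>) p) + tau_deriv \<tau> D) + \<tau> D)"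
  proof (rule AE_I2)
    fix \<omega>
    have "mf p D \<omega> \<le> D * (tau_deriv \<tau> (dist (Y \<omega>) p) + tau_deriv \<tau> D) + \<tau> D" unfolding mf_def by simp
    then show "norm (mf p D \<omega>) \<le> norm (D * (tau_deriv \<tau> (dist (Y \<omega>) p) + tau_deriv \<tau> D) + \<tau> D)"
      using mf_nonneg[OF D, of p \<omega>] by simp
  qed
qed

lemma R_close: assumes D1: "1 \<le> dist q p"
  shows "\<bar>(\<integral>\<omega>. \<tau> (dist (Y \<omega>) q) - \<tau> (dist (Y \<omega>) p) \<partial>M) / \<tau> (dist q p) - 1\<bar> \<le> Gf p (dist q p)"
proof -
  define D where "D = dist q p"
  have Dp: "0 < D" using D1 unfolding D_def by linarith
  have tD: "0 < \<tau> D" using tau_pos[OF tau Dp] .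
  define h where "h \<omega> = \<tau> (dist (Y \<omega>) q) - \<tau> (dist (Y \<omega>) p) - \<tau> D" for \<omega>
  have hm: "\<bar>h \<omega>\<bar> \<le> mf p D \<omega>" for \<omega>
  proof -
    have "\<bar>h \<omega>\<bar> \<le> dist (Y \<omega>) p * tau_deriv \<tau> D + 2 * dist (Y \<omega>) p * tau_deriv \<tau> (dist (Y \<omega>) p)"
      unfolding h_def by (rule P2[OF tau]) (use Dp dist_diff2 D_def in auto)
    moreover have "\<bar>\<tau> (dist (Y \<omega>) q) - \<tau> (dist (Y \<omega>) p)\<bar> \<le> D * (tau_deriv \<tau> (dist (Y \<omega>) p) + tau_deriv \<tau> D)"
      by (rule P1[OF tau]) (use dist_diff D_def in auto)
    then have "\<bar>h \<omega>\<bar> \<le> D * (tau_deriv \<tau> (dist (Y \<omega>) p) + tau_deriv \<tau> D) + \<tau> D"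
      unfolding h_def using tD by linarith
    ultimately show ?thesis unfolding mf_def by simp
  qed
  have hint: "integrable M h" unfolding h_def using diff_int by simp
  have mint: "integrable M (mf p D)" using mf_int Dp by simp
  have eq: "(\<integral>\<omega>. \<tau> (dist (Y \<omega>) q) - \<tau> (dist (Y \<omega>) p) \<partial>M) = integral\<^sup>L M h + \<tau> D"
    unfolding h_def using diff_int[of q p] by (simp add: prob_space)
  have "integral\<^sup>L M h \<le> integral\<^sup>L M (mf p D)"
    by (rule integral_mono[OF hint mint]) (use hm abs_le_iff in blast)
  moreover have "integral\<^sup>L M (\<lambda>\<omega>. - h \<omega>) \<le> integral\<^sup>L M (mf p D)"
    by (rule integral_mono[OF _ mint]) (use hm hint abs_le_iff in auto)
  ultimately have "\<bar>integral\<^sup>L M h\<bar> \<le> integral\<^sup>L M (mf p D)" by simp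
  then have "\<bar>integral\<^sup>L M h\<bar> / \<tau> D \<le> integral\<^sup>L M (mf p D) / \<tau> D"
    using tD by (simp add: divide_right_mono)
  moreover have "(integral\<^sup>L M h + \<tau> D) / \<tau> D - 1 = integral\<^sup>L M h / \<tau> D"
    using tD by (simp add: field_simps)
  ultimately show ?thesis unfolding eq Gf_def D_def[symmetric] using tD by simp
qed


lemma G_lim: "(Gf p \<longlongrightarrow> 0) at_top"
proof -
  have t1: "0 < \<tau> 1" using tau_pos[OF tau] by simp
  define w where "w \<omega> = tau_deriv \<tau> (dist (Y \<omega>) p) / \<tau> 1 + 5" for \<omega>
  have "((\<lambda>D. \<integral>\<omega>. mf p D \<omega> / \<tau> D \<partial>M) \<longlongrightarrow> (\<integral>\<omega>. 0 \<partial>M)) at_top"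
  proof (rule integral_dominated_convergence_at_top[where w=w])
    show "(\<lambda>\<omega>. 0::real) \<in> borel_measurable M" by simp
    show "(\<lambda>\<omega>. mf p D \<omega> / \<tau> D) \<in> borel_measurable M" for D by measurable
    show "integrable M w" unfolding w_def using T_int by simp
    show "AE \<omega> in M. ((\<lambda>D. mf p D \<omega> / \<tau> D) \<longlongrightarrow> 0) at_top"
    proof (rule AE_I2)
      fix \<omega>
      define B where "B = dist (Y \<omega>) p"
      define TB where "TB = tau_deriv \<tau> B"
      have B: "0 \<le> B" "0 \<le> TB" using T_nonneg[OF tau] by (auto simp: B_def TB_def)
      show "((\<lambda>D. mf p D \<omega> / \<tau> D) \<longlongrightarrow> 0) at_top"
      proof (rule tendsto_sandwich[where f="\<lambda>_. 0" and h="\<lambda>D. (4 * B + 2 * B * TB / \<tau> 1) * inverse D"])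
        show "((\<lambda>_. 0::real) \<longlongrightarrow> 0) at_top" by simp
        show "((\<lambda>D. (4 * B + 2 * B * TB / \<tau> 1) * inverse D) \<longlongrightarrow> 0) at_top"
          using tendsto_mult[OF tendsto_const tendsto_inverse_0_at_top[OF filterlim_ident], of "4 * B + 2 * B * TB / \<tau> 1"]
          by simp
        show "\<forall>\<^sub>F D in at_top. 0 \<le> mf p D \<omega> / \<tau> D"
          using eventually_ge_at_top[of "0::real"]
          by eventually_elim (use mf_nonneg tau_nonneg[OF tau] in auto)
        show "\<forall>\<^sub>F D in at_top. mf p D \<omega> / \<tau> D \<le> (4 * B + 2 * B * TB / \<tau> 1) * inverse D"
          using eventually_ge_at_top[of "1::real"]
        proof eventually_elim
          case (elim D)
          have Dp: "0 < D" using elim by simp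
          have tD: "0 < \<tau> D" using tau_pos[OF tau Dp] .
          have lin: "D * \<tau> 1 \<le> \<tau> D" using tau_lin[OF tau elim] .
          have DT: "D * tau_deriv \<tau> D \<le> 4 * \<tau> D" using tau_DT[OF tau Dp] .
          have "mf p D \<omega> \<le> B * tau_deriv \<tau> D + 2 * B * TB" unfolding mf_def B_def TB_def by simp
          then have "mf p D \<omega> / \<tau> D \<le> (B * tau_deriv \<tau> D + 2 * B * TB) / \<tau> D"
            using tD by (simp add: divide_right_mono)
          also have "\<dots> = B * (tau_deriv \<tau> D / \<tau> D) + (2 * B * TB) / \<tau> D" by (simp add: add_divide_distrib)
          also have "\<dots> \<le> B * (4 / D) + (2 * B * TB) / (D * \<tau> 1)"
          proof (rule add_mono)
            have "tau_deriv \<tau> D / \<tau> D \<le> 4 / D" using DT tD Dp by (simp add: field_simps)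
            then show "B * (tau_deriv \<tau> D / \<tau> D) \<le> B * (4 / D)" using B(1) by (rule mult_left_mono)
            show "(2 * B * TB) / \<tau> D \<le> (2 * B * TB) / (D * \<tau> 1)"
              by (rule divide_left_mono) (use B lin Dp t1 tD in auto)
          qed
          also have "\<dots> = (4 * B + 2 * B * TB / \<tau> 1) * inverse D"
            using Dp t1 by (simp add: field_simps)
          finally show ?case .
        qed
      qed
    qed
    show "\<forall>\<^sub>F D in at_top. AE \<omega> in M. norm (mf p D \<omega> / \<tau> D) \<le> w \<omega>"
      using eventually_ge_at_top[of "1::real"]
    proof eventually_elim
      case (elim D)
      have Dp: "0 < D" using elim by simp
      have tD: "0 < \<tau> D" using tau_pos[OF tau Dp] .
      have lin: "D * \<tau> 1 \<le> \<tau> D" using tau_lin[OF tau elim] .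
      have DT: "D * tau_deriv \<tau> D \<le> 4 * \<tau> D" using tau_DT[OF tau Dp] .
      show ?case
      proof (rule AE_I2)
        fix \<omega>
        define TB where "TB = tau_deriv \<tau> (dist (Y \<omega>) p)"
        have TB: "0 \<le> TB" using T_nonneg[OF tau] by (auto simp: TB_def)
        have "mf p D \<omega> \<le> D * (TB + tau_deriv \<tau> D) + \<tau> D" unfolding mf_def TB_def by simp
        then have "mf p D \<omega> / \<tau> D \<le> (D * (TB + tau_deriv \<tau> D) + \<tau> D) / \<tau> D"
          using tD by (simp add: divide_right_mono)
        also have "\<dots> = TB * (D / \<tau> D) + (D * tau_deriv \<tau> D) / \<tau> D + 1"
          using tD by (simp add: field_simps)
        also have "\<dots> \<le> TB * (1 / \<tau> 1) + 4 + 1"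
        proof -
          have "D / \<tau> D \<le> 1 / \<tau> 1" using lin tD t1 by (simp add: field_simps)
          then have "TB * (D / \<tau> D) \<le> TB * (1 / \<tau> 1)" using TB by (rule mult_left_mono)
          moreover have "(D * tau_deriv \<tau> D) / \<tau> D \<le> 4" using DT tD by (simp add: field_simps)
          ultimately show ?thesis by linarith
        qed
        also have "\<dots> = w \<omega>" unfolding w_def TB_def by simp
        finally show "norm (mf p D \<omega> / \<tau> D) \<le> w \<omega>"
          using mf_nonneg[of D p \<omega>] Dp tD by simp
      qed
    qed
  qed
  then show ?thesis by (simp add: Gf_def[abs_def])
qed


definition "Hf p r = (\<integral>\<omega>. tau_deriv \<tau> (dist (Y \<omega>) p + r) \<partial>M)"

lemma ratio_le: assumes "0 < dist q p" "dist q p \<le> r"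
  shows "(\<integral>\<omega>. \<tau> (dist (Y \<omega>) q) - \<tau> (dist (Y \<omega>) p) \<partial>M) / dist q p \<le> Hf p r"
proof -
  define D where "D = dist q p"
  have D: "0 < D" "D \<le> r" using assms by (auto simp: D_def)
  have "(\<integral>\<omega>. \<tau> (dist (Y \<omega>) q) - \<tau> (dist (Y \<omega>) p) \<partial>M) \<le> (\<integral>\<omega>. D * tau_deriv \<tau> (dist (Y \<omega>) p + r) \<partial>M)"
  proof (rule integral_mono[OF diff_int])
    show "integrable M (\<lambda>\<omega>. D * tau_deriv \<tau> (dist (Y \<omega>) p + r))" using T_shift_int[of r p] D by simp
    fix \<omega>
    have "\<tau> (dist (Y \<omega>) q) - \<tau> (dist (Y \<omega>) p) \<le> D * tau_deriv \<tau> (dist (Y \<omega>) p + D)"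
      by (rule P3[OF tau]) (use dist_diff D_def in auto)
    also have "\<dots> \<le> D * tau_deriv \<tau> (dist (Y \<omega>) p + r)"
      using D T_mono[OF tau, of "dist (Y \<omega>) p + D" "dist (Y \<omega>) p + r"] by (intro mult_left_mono) auto
    finally show "\<tau> (dist (Y \<omega>) q) - \<tau> (dist (Y \<omega>) p) \<le> D * tau_deriv \<tau> (dist (Y \<omega>) p + r)" .
  qed
  also have "\<dots> = D * Hf p r" by (simp add: Hf_def)
  finally show ?thesis using D by (simp add: D_def[symmetric] pos_divide_le_eq mult.commute)
qed

lemma H_lim: "(Hf p \<longlongrightarrow> (\<integral>\<omega>. tau_deriv \<tau> (dist (Y \<omega>) p) \<partial>M)) (at_right 0)"
  unfolding filterlim_at_right_to_top
proof -
  define w where "w \<omega> = tau_deriv \<tau> (dist (Y \<omega>) p) + tau_deriv \<tau> 1" for \<omega>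
  have "((\<lambda>x. \<integral>\<omega>. tau_deriv \<tau> (dist (Y \<omega>) p + \<bar>inverse x\<bar>) \<partial>M) \<longlongrightarrow> (\<integral>\<omega>. tau_deriv \<tau> (dist (Y \<omega>) p) \<partial>M)) at_top"
  proof (rule integral_dominated_convergence_at_top[where w=w])
    show "(\<lambda>\<omega>. tau_deriv \<tau> (dist (Y \<omega>) p)) \<in> borel_measurable M" by measurable
    show "(\<lambda>\<omega>. tau_deriv \<tau> (dist (Y \<omega>) p + \<bar>inverse x\<bar>)) \<in> borel_measurable M" for x
      by (rule T_meas) auto
    show "integrable M w" unfolding w_def using T_int by simp
    show "AE \<omega> in M. ((\<lambda>x. tau_deriv \<tau> (dist (Y \<omega>) p + \<bar>inverse x\<bar>)) \<longlongrightarrow> tau_deriv \<tau> (dist (Y \<omega>) p)) at_top"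
    proof (rule AE_I2)
      fix \<omega>
      have "(tau_deriv \<tau> \<longlongrightarrow> tau_deriv \<tau> (dist (Y \<omega>) p)) (at_right (dist (Y \<omega>) p))"
        by (rule T_right_cont[OF tau]) simp
      then have "((\<lambda>x. tau_deriv \<tau> (dist (Y \<omega>) p + inverse x)) \<longlongrightarrow> tau_deriv \<tau> (dist (Y \<omega>) p)) at_top"
        unfolding filterlim_at_right_to_0[of _ _ "dist (Y \<omega>) p"] filterlim_at_right_to_top
        by (simp add: add.commute)
      moreover have "\<forall>\<^sub>F x in at_top. tau_deriv \<tau> (dist (Y \<omega>) p + inverse x) = tau_deriv \<tau> (dist (Y \<omega>) p + \<bar>inverse x\<bar>)"
        using eventually_gt_at_top[of "0::real"] by eventually_elim simp
      ultimately show "((\<lambda>x. tau_deriv \<tau> (dist (Y \<omega>) p + \<bar>inverse x\<bar>)) \<longlongrightarrow> tau_deriv \<tau> (dist (Y \<omega>) p)) at_top"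
        by (rule tendsto_cong[THEN iffD1, rotated])
    qed
    show "\<forall>\<^sub>F x in at_top. AE \<omega> in M. norm (tau_deriv \<tau> (dist (Y \<omega>) p + \<bar>inverse x\<bar>)) \<le> w \<omega>"
      using eventually_ge_at_top[of "1::real"]
    proof eventually_elim
      case (elim x)
      show ?case
      proof (rule AE_I2)
        fix \<omega>
        have "tau_deriv \<tau> (dist (Y \<omega>) p + \<bar>inverse x\<bar>) \<le> tau_deriv \<tau> (dist (Y \<omega>) p) + tau_deriv \<tau> \<bar>inverse x\<bar>"
          by (rule T_subadd[OF tau]) (use elim in auto)
        also have "\<dots> \<le> w \<omega>" unfolding w_def
          using T_mono[OF tau, of "\<bar>inverse x\<bar>" 1] elim by (simp add: inverse_le_1_iff)
        finally show "norm (tau_deriv \<tau> (dist (Y \<omega>) p + \<bar>inverse x\<bar>)) \<le> w \<omega>"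
          using T_nonneg[OF tau, of "dist (Y \<omega>) p + \<bar>inverse x\<bar>"] elim by simp
      qed
    qed
  qed
  moreover have "\<forall>\<^sub>F x in at_top. (\<integral>\<omega>. tau_deriv \<tau> (dist (Y \<omega>) p + \<bar>inverse x\<bar>) \<partial>M) = Hf p (inverse x)"
    using eventually_gt_at_top[of "0::real"] by eventually_elim (simp add: Hf_def)
  ultimately show "((\<lambda>x. Hf p (inverse x)) \<longlongrightarrow> (\<integral>\<omega>. tau_deriv \<tau> (dist (Y \<omega>) p) \<partial>M)) at_top"
    by (rule tendsto_cong[THEN iffD1, rotated])
qed

end


theorem mainTheorem4:
  fixes M :: "'b measure" and Y :: "'b \<Rightarrow> 'a::metric_space"
    and o' p :: 'a and \<tau> :: "real \<Rightarrow> real"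
  assumes "prob_space M"
    and "Y \<in> measurable M borel"
    and "\<tau> \<in> S0_plus"
    and "(\<integral>\<^sup>+ \<omega>. ennreal (tau_deriv \<tau> (dist (Y \<omega>) o')) \<partial>M) < \<infinity>"
  shows "(\<not> bounded (UNIV :: 'a set) \<longrightarrow>
           Liminf at_top (\<lambda>r. INF q\<in>UNIV - ball o' r.
              ereal ((\<integral>\<omega>. \<tau> (dist (Y \<omega>) q) - \<tau> (dist (Y \<omega>) p) \<partial>M) / \<tau> (dist q p))) = 1
         \<and> Limsup at_top (\<lambda>r. SUP q\<in>UNIV - ball o' r.
              ereal ((\<integral>\<omega>. \<tau> (dist (Y \<omega>) q) - \<tau> (dist (Y \<omega>) p) \<partial>M) / \<tau> (dist q p))) = 1)
       \<and> (p islimpt (UNIV :: 'a set) \<longrightarrow>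
           Limsup (at_right 0) (\<lambda>r. SUP q\<in>ball p r - {p}.
              ereal ((\<integral>\<omega>. \<tau> (dist (Y \<omega>) q) - \<tau> (dist (Y \<omega>) p) \<partial>M) / dist q p))
           \<le> ereal (\<integral>\<omega>. tau_deriv \<tau> (dist (Y \<omega>) p) \<partial>M))"
proof -
  note ctx = assms(3) assms(1) assms(2) assms(4)
  define I where "I q = (\<integral>\<omega>. \<tau> (dist (Y \<omega>) q) - \<tau> (dist (Y \<omega>) p) \<partial>M)" for q
  have part1: "\<not> bounded (UNIV :: 'a set) \<longrightarrow>
           Liminf at_top (\<lambda>r. INF q\<in>UNIV - ball o' r. ereal (I q / \<tau> (dist q p))) = 1
         \<and> Limsup at_top (\<lambda>r. SUP q\<in>UNIV - ball o' r. ereal (I q / \<tau> (dist q p))) = 1"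
  proof
    assume unb: "\<not> bounded (UNIV :: 'a set)"
    obtain G where G: "(G \<longlongrightarrow> 0) at_top"
      and GR: "\<And>q. 1 \<le> dist q p \<Longrightarrow> \<bar>I q / \<tau> (dist q p) - 1\<bar> \<le> G (dist q p)"
      using G_lim[OF ctx] R_close[OF ctx] unfolding I_def by blast
    have ne: "UNIV - ball o' r \<noteq> {}" for r
    proof -
      from unb have "\<not> (\<forall>y. dist o' y \<le> r)" unfolding bounded_def by blast
      then obtain y where "dist o' y > r" by (auto simp: not_le)
      then have "y \<in> UNIV - ball o' r" by simp
      then show ?thesis by blast
    qed
    have ev: "eventually (\<lambda>r. ereal (1 - \<epsilon>) \<le> (INF q\<in>UNIV - ball o' r. ereal (I q / \<tau> (dist q p)))
        \<and> (INF q\<in>UNIV - ball o' r. ereal (I q / \<tau> (dist q p))) \<le> ereal (1 + \<epsilon>)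
        \<and> ereal (1 - \<epsilon>) \<le> (SUP q\<in>UNIV - ball o' r. ereal (I q / \<tau> (dist q p)))
        \<and> (SUP q\<in>UNIV - ball o' r. ereal (I q / \<tau> (dist q p))) \<le> ereal (1 + \<epsilon>)) at_top"
      if e: "\<epsilon> > 0" for \<epsilon>
    proof -
      obtain R0 where R0: "\<And>D. D \<ge> R0 \<Longrightarrow> G D < \<epsilon>"
        using order_tendstoD(2)[OF G e] unfolding eventually_at_top_linorder by blast
      show ?thesis
        using eventually_ge_at_top[of "max R0 1 + dist o' p"]
      proof eventually_elim
        case (elim r)
        have bnd: "ereal (1 - \<epsilon>) \<le> ereal (I q / \<tau> (dist q p)) \<and> ereal (I q / \<tau> (dist q p)) \<le> ereal (1 + \<epsilon>)"
          if q: "q \<in> UNIV - ball o' r" for q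
        proof -
          have "dist o' q \<ge> r" using q by (simp add: ball_def not_less)
          moreover have "dist o' q \<le> dist o' p + dist q p" using dist_triangle[of o' q p] by (simp add: dist_commute)
          ultimately have "dist q p \<ge> max R0 1" using elim by linarith
          then have "\<bar>I q / \<tau> (dist q p) - 1\<bar> < \<epsilon>" using GR[of q] R0[of "dist q p"] by fastforce
          then show ?thesis by (simp add: abs_less_iff)
        qed
        have A: "ereal (1 - \<epsilon>) \<le> (INF q\<in>UNIV - ball o' r. ereal (I q / \<tau> (dist q p)))"
          by (rule INF_greatest) (use bnd in blast)
        have B: "(SUP q\<in>UNIV - ball o' r. ereal (I q / \<tau> (dist q p))) \<le> ereal (1 + \<epsilon>)"
          by (rule SUP_least) (use bnd in blast)
        have C: "(INF q\<in>UNIV - ball o' r. ereal (I q / \<tau> (dist q p))) \<le> (SUP q\<in>UNIV - ball o' r. ereal (I q / \<tau> (dist q p)))"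
          by (rule INF_le_SUP[OF ne])
        show ?case using A B C by (auto intro: order_trans)
      qed
    qed
    have t1: "((\<lambda>r. INF q\<in>UNIV - ball o' r. ereal (I q / \<tau> (dist q p))) \<longlongrightarrow> ereal 1) at_top"
      by (rule ereal_eps_tendsto, drule ev) (erule eventually_mono, blast)
    have t2: "((\<lambda>r. SUP q\<in>UNIV - ball o' r. ereal (I q / \<tau> (dist q p))) \<longlongrightarrow> ereal 1) at_top"
      by (rule ereal_eps_tendsto, drule ev) (erule eventually_mono, blast)
    show "Liminf at_top (\<lambda>r. INF q\<in>UNIV - ball o' r. ereal (I q / \<tau> (dist q p))) = 1
         \<and> Limsup at_top (\<lambda>r. SUP q\<in>UNIV - ball o' r. ereal (I q / \<tau> (dist q p))) = 1"
      using lim_imp_Liminf[OF trivial_limit_at_top_linorder t1] lim_imp_Limsup[OF trivial_limit_at_top_linorder t2]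
      by (simp add: one_ereal_def)
  qed
  have part2: "Limsup (at_right 0) (\<lambda>r. SUP q\<in>ball p r - {p}. ereal (I q / dist q p))
           \<le> ereal (\<integral>\<omega>. tau_deriv \<tau> (dist (Y \<omega>) p) \<partial>M)"
  proof -
    obtain H where H: "(H \<longlongrightarrow> (\<integral>\<omega>. tau_deriv \<tau> (dist (Y \<omega>) p) \<partial>M)) (at_right 0)"
      and HR: "\<And>q r. 0 < dist q p \<Longrightarrow> dist q p \<le> r \<Longrightarrow> I q / dist q p \<le> H r"
      using H_lim[OF ctx] ratio_le[OF ctx] unfolding I_def by blast
    have "Limsup (at_right 0) (\<lambda>r. SUP q\<in>ball p r - {p}. ereal (I q / dist q p))
        \<le> Limsup (at_right 0) (\<lambda>r. ereal (H r))"
    proof (rule Limsup_mono[OF always_eventually], rule allI)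
      fix r
      show "(SUP q\<in>ball p r - {p}. ereal (I q / dist q p)) \<le> ereal (H r)"
      proof (rule SUP_least)
        fix q assume q: "q \<in> ball p r - {p}"
        then have "0 < dist q p" "dist q p \<le> r" by (auto simp: dist_commute)
        then show "ereal (I q / dist q p) \<le> ereal (H r)" using HR by simp
      qed
    qed
    also have "\<dots> = ereal (\<integral>\<omega>. tau_deriv \<tau> (dist (Y \<omega>) p) \<partial>M)"
      by (rule lim_imp_Limsup[OF trivial_limit_at_right_real]) (rule tendsto_ereal[OF H])
    finally show ?thesis .
  qed
  show ?thesis using part1 part2 unfolding I_def by blast
qed

end
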